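(* Let $k\ge2$ be even, $\alpha_1,\dots,\alpha_k$ positive integers and $G=C(\alpha_1,\dots,\alpha_k)$. Then all $k$ eigenvalues of the quotient matrix $Q_L$ are simple (pairwise distinct).
   Context: $C(\alpha_1,\dots,\alpha_k)$ is defined recursively by $C(\alpha_1)=\overline{K_{\alpha_1}}$ and $C(\alpha_1,\dots,\alpha_i)=\overline{C(\alpha_1,\dots,\alpha_{i-1})\cup K_{\alpha_i}}$ (disjoint union, then complement). $\pi_i$ is the set of $\alpha_i$ vertices introduced at step $i$; for $k$ even, $\pi_i$ is a clique for $i$ odd, independent for $i$ even, and for $i<j$ vertices of $\pi_i,\pi_j$ are adjacent iff $j$ is even. $L=D-A$ is the Laplacian and $Q_L$ the $k\times k$ matrix with $(Q_L)_{ij}=\sum_{v\in\pi_j}L_{uv}$ for any $u\in\pi_i$. *)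

theory Defs
  imports "Jordan_Normal_Form.Char_Poly"
begin

text \<open>Vertices of C(alpha_1,...,alpha_k): pairs (i,t) with i < k (0-indexed part, i.e. pi_(i+1))
  and t < alpha_(i+1).\<close>
definition cverts :: "nat list \<Rightarrow> (nat \<times> nat) set" where
  "cverts as = {(i,t). i < length as \<and> t < as ! i}"

text \<open>Adjacency of the graph built after m steps of the recursion
  (G_0 = empty graph, G_(m+1) = complement of (G_m disjoint-union K_(alpha_(m+1)))),
  so G_1 = complement of K_(alpha_1) and G_k = C(alpha_1,...,alpha_k).
  Only meaningful on vertices (i,t) with i < m, t < as!i.\<close>
fun cadj :: "nat list \<Rightarrow> nat \<Rightarrow> nat \<times> nat \<Rightarrow> nat \<times> nat \<Rightarrow> bool" where
  "cadj as 0 u v = False"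
| "cadj as (Suc m) u v =
     (u \<noteq> v \<and> \<not> (if fst u < m \<and> fst v < m then cadj as m u v
                    else (fst u = m \<and> fst v = m)))"

definition Cadj :: "nat list \<Rightarrow> nat \<times> nat \<Rightarrow> nat \<times> nat \<Rightarrow> bool" where
  "Cadj as = cadj as (length as)"

definition cdeg :: "nat list \<Rightarrow> nat \<times> nat \<Rightarrow> nat" where
  "cdeg as u = card {v \<in> cverts as. Cadj as u v}"

definition lap :: "nat list \<Rightarrow> nat \<times> nat \<Rightarrow> nat \<times> nat \<Rightarrow> real" where
  "lap as u v = (if u = v then real (cdeg as u) else if Cadj as u v then -1 else 0)"

definition QL :: "nat list \<Rightarrow> real mat" where
  "QL as = mat (length as) (length as)
     (\<lambda>(i,j). \<Sum>t<as ! j. lap as (i,0) (j,t))"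

end

theory Submission imports Defs begin

definition ladj :: "nat \<Rightarrow> nat \<Rightarrow> bool" where "ladj i j = (i \<noteq> j \<and> odd (max i j))"

definition qe :: "(nat \<Rightarrow> real) \<Rightarrow> nat \<Rightarrow> nat \<Rightarrow> nat \<Rightarrow> real" where
  "qe w n i j = (if i = j then (\<Sum>l<n. if ladj i l then w l else 0) else 0) - (if ladj i j then w j else 0)"

definition Cm :: "(nat \<Rightarrow> real) \<Rightarrow> nat \<Rightarrow> complex \<Rightarrow> complex mat" where
  "Cm w n x = mat n n (\<lambda>(i,j). (if i = j then x else 0) - complex_of_real (qe w n i j))"

definition E where "E w n x = det (Cm w n x)"

lemma ladj_refl[simp]: "\<not> ladj i i" by (simp add: ladj_def)

lemma qe_rowsum: assumes "i < n" shows "(\<Sum>k<n. qe w n i k) = 0"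
proof -
  have "(\<Sum>k<n. qe w n i k) = (\<Sum>k<n. (if i = k then (\<Sum>l<n. if ladj i l then w l else 0) else 0))
      - (\<Sum>k<n. if ladj i k then w k else 0)"
    unfolding qe_def sum_subtractf ..
  also have "\<dots> = 0" 
    using assms by (auto simp: sum.delta ladj_def)
  finally show ?thesis .
qed

lemma laplace_last:
  assumes A: "A \<in> carrier_mat (Suc n) (Suc n)" and z: "\<And>i. i < n \<Longrightarrow> A $$ (i,n) = 0"
  shows "det A = A $$ (n,n) * det (mat n n (\<lambda>(i,j). A $$ (i,j)))"
proof -
  have "det A = (\<Sum>i<Suc n. A $$ (i,n) * cofactor A i n)"
    by (rule laplace_expansion_column[OF A], simp)
  also have "\<dots> = A $$ (n,n) * cofactor A n n" using z by simp
  also have "mat_delete A n n = mat n n (\<lambda>(i,j). A $$ (i,j))"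
    using A by (intro eq_matI) (auto simp: mat_delete_def)
  then have "cofactor A n n = det (mat n n (\<lambda>(i,j). A $$ (i,j)))"
    by (simp add: cofactor_def)
  finally show ?thesis .
qed

lemma E_iso: assumes "even n" shows "E w (Suc n) x = x * E w n x"
proof -
  have "E w (Suc n) x = Cm w (Suc n) x $$ (n,n) * det (mat n n (\<lambda>(i,j). Cm w (Suc n) x $$ (i,j)))"
    unfolding E_def
    by (rule laplace_last) (auto simp: Cm_def qe_def ladj_def assms)
  also have "mat n n (\<lambda>(i,j). Cm w (Suc n) x $$ (i,j)) = Cm w n x"
    by (intro eq_matI) (auto simp: Cm_def qe_def ladj_def assms)
  also have "Cm w (Suc n) x $$ (n,n) = x"
    using assms by (auto simp: Cm_def qe_def ladj_def intro!: sum.neutral)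
  finally show ?thesis unfolding E_def .
qed

lemma qe_Suc: assumes "odd n" "i < n" "k < n"
  shows "qe w (Suc n) i k = qe w n i k + (if i = k then w n else 0)"
  using assms by (auto simp: qe_def ladj_def)

lemma E_dom: assumes n: "odd n"
  shows "(x - complex_of_real (w n)) * E w (Suc n) x
     = x * (x - complex_of_real (w n) - complex_of_real (\<Sum>l<n. w l)) * E w n (x - complex_of_real (w n))"
proof -
  define a where "a = complex_of_real (w n)"
  define W where "W = complex_of_real (\<Sum>l<n. w l)"
  define A where "A = Cm w (Suc n) x"
  define T where "T = mat (Suc n) (Suc n) (\<lambda>(i,j). if j = n then (if i = n then x - a else -a) else if i = j then 1 else (0::complex))"
  have A: "A \<in> carrier_mat (Suc n) (Suc n)" by (simp add: A_def Cm_def)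
  have T: "T \<in> carrier_mat (Suc n) (Suc n)" by (simp add: T_def)
  have "det T = det (transpose_mat T)" using T by (simp add: det_transpose)
  also have "\<dots> = (transpose_mat T) $$ (n,n) * det (mat n n (\<lambda>(i,j). transpose_mat T $$ (i,j)))"
    by (rule laplace_last) (auto simp: T_def)
  also have "mat n n (\<lambda>(i,j). transpose_mat T $$ (i,j)) = 1\<^sub>m n"
    by (intro eq_matI) (auto simp: T_def)
  finally have detT: "det T = x - a" by (simp add: T_def)
  have A1: "A $$ (i,k) = Cm w n (x - a) $$ (i,k)" if "i < n" "k < n" for i k
    using that n by (auto simp: A_def Cm_def qe_Suc a_def)
  have A2: "A $$ (i,n) = a" if "i < n" for i
    using that n by (auto simp: A_def Cm_def qe_def ladj_def a_def)
  have A3: "A $$ (n,k) = complex_of_real (w k)" if "k < n" for k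
    using that n by (auto simp: A_def Cm_def qe_def ladj_def)
  have A4: "A $$ (n,n) = x - W"
  proof -
    have "(\<Sum>l<Suc n. if ladj n l then w l else 0) = (\<Sum>l<n. w l)"
      using n by (auto simp: ladj_def intro!: sum.cong)
    then show ?thesis by (simp add: A_def Cm_def qe_def W_def)
  qed
  have rs: "(\<Sum>k<n. A $$ (i,k)) = x - a" if "i < n" for i
  proof -
    have "(\<Sum>k<n. A $$ (i,k)) = (\<Sum>k<n. (if i = k then x - a else 0) - complex_of_real (qe w n i k))"
      using that by (intro sum.cong) (auto simp: A1 Cm_def)
    also have "\<dots> = (x - a) - complex_of_real (\<Sum>k<n. qe w n i k)"
      using that by (simp add: sum_subtractf)
    finally show ?thesis using qe_rowsum[OF that] by simp
  qed
  have prod: "(A * T) $$ (i,j) = (\<Sum>k<Suc n. A $$ (i,k) * T $$ (k,j))" if "i < Suc n" "j < Suc n" for i j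
    using that A T by (simp add: scalar_prod_def lessThan_atLeast0)
  have B1: "(A * T) $$ (i,j) = A $$ (i,j)" if "i < Suc n" "j < n" for i j
  proof -
    have "(A * T) $$ (i,j) = (\<Sum>k<Suc n. A $$ (i,k) * (if k = j then 1 else 0))"
      unfolding prod[OF that(1) less_SucI[OF that(2)]] using that by (simp add: T_def)
    also have "\<dots> = (\<Sum>k<Suc n. if k = j then A $$ (i,k) else 0)" by (intro sum.cong) auto
    also have "\<dots> = A $$ (i,j)" using that by auto
    finally show ?thesis .
  qed
  have B2: "(A * T) $$ (i,n) = (\<Sum>k<n. A $$ (i,k)) * (-a) + A $$ (i,n) * (x - a)" if "i < Suc n" for i
    unfolding prod[OF that lessI] using that by (simp add: T_def sum_distrib_right sum_negf)
  have B0: "(A * T) $$ (i,n) = 0" if "i < n" for i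
    using B2[of i] rs[OF that] A2[OF that] that by (simp add: algebra_simps)
  have "det (A * T) = det A * (x - a)" using det_mult[OF A T] detT by simp
  also have "det (A * T) = (A * T) $$ (n,n) * det (mat n n (\<lambda>(i,j). (A * T) $$ (i,j)))"
    by (rule laplace_last) (use A T B0 in auto)
  also have "mat n n (\<lambda>(i,j). (A * T) $$ (i,j)) = Cm w n (x - a)"
    by (intro eq_matI) (auto simp: B1 A1 Cm_def)
  also have "(A * T) $$ (n,n) = x * (x - a - W)"
  proof -
    have "(\<Sum>k<n. A $$ (n,k)) = W" by (simp add: A3 W_def)
    then show ?thesis by (simp add: B2 A4 algebra_simps)
  qed
  finally show ?thesis by (simp add: E_def A_def a_def W_def mult.commute)
qed

definition Qc :: "(nat \<Rightarrow> real) \<Rightarrow> nat \<Rightarrow> complex mat" where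
  "Qc w n = mat n n (\<lambda>(i,j). complex_of_real (qe w n i j))"

lemma E_char_poly: "E w n x = poly (char_poly (Qc w n)) x"
proof -
  have "poly (char_poly (Qc w n)) x = det (- char_matrix (Qc w n) x)"
    by (rule char_poly_matrix[of _ n]) (simp add: Qc_def)
  also have "- char_matrix (Qc w n) x = Cm w n x"
    by (intro eq_matI) (auto simp: Qc_def Cm_def char_matrix_def)
  finally show ?thesis by (simp add: E_def)
qed

definition tp :: "real list \<Rightarrow> complex poly" where
  "tp R = [:0,1:] * (\<Prod>r\<leftarrow>R. [:- complex_of_real r, 1:])"

lemma poly_tp: "poly (tp R) x = x * (\<Prod>r\<leftarrow>R. (x - complex_of_real r))"
proof -
  have "poly (\<Prod>r\<leftarrow>R. [:- complex_of_real r, 1:]) x = (\<Prod>r\<leftarrow>R. (x - complex_of_real r))"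
    by (induction R) (auto simp: algebra_simps)
  then show ?thesis unfolding tp_def by simp
qed

lemma poly_ext: fixes p q :: "complex poly"
  assumes "\<And>x. x \<noteq> a \<Longrightarrow> poly p x = poly q x" shows "p = q"
proof (rule ccontr)
  assume "p \<noteq> q"
  then have "p - q \<noteq> 0" by simp
  then have "finite {x. poly (p - q) x = 0}" by (rule poly_roots_finite)
  moreover have "UNIV - {a} \<subseteq> {x. poly (p - q) x = 0}" using assms by auto
  ultimately have "finite (UNIV - {a} :: complex set)" by (rule finite_subset[rotated])
  then have "finite (UNIV :: complex set)" by simp
  then show False using infinite_UNIV_char_0 by blast
qed

lemma E_step: assumes n: "odd n"
  and IH: "\<And>y. E w n y = y * (\<Prod>r\<leftarrow>R0. (y - complex_of_real r))"
  shows "char_poly (Qc w (Suc n)) = tp ((w n + (\<Sum>l<n. w l)) # map (\<lambda>r. r + w n) R0)"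
proof (rule poly_ext[where a = "complex_of_real (w n)"])
  fix x assume x: "x \<noteq> complex_of_real (w n)"
  define a where "a = complex_of_real (w n)"
  define W where "W = complex_of_real (\<Sum>l<n. w l)"
  have "(x - a) * E w (Suc n) x = x * (x - a - W) * E w n (x - a)"
    using E_dom[OF n] by (simp add: a_def W_def)
  also have "\<dots> = (x - a) * (x * (x - a - W) * (\<Prod>r\<leftarrow>R0. (x - a - complex_of_real r)))"
    by (simp add: IH)
  finally have "E w (Suc n) x = x * (x - a - W) * (\<Prod>r\<leftarrow>R0. (x - a - complex_of_real r))"
    using x by (simp add: a_def)
  also have "\<dots> = poly (tp ((w n + (\<Sum>l<n. w l)) # map (\<lambda>r. r + w n) R0)) x"
    by (simp add: poly_tp a_def W_def o_def algebra_simps)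
  finally show "poly (char_poly (Qc w (Suc n))) x = poly (tp ((w n + (\<Sum>l<n. w l)) # map (\<lambda>r. r + w n) R0)) x"
    by (simp add: E_char_poly)
qed

lemma E0: "E w 0 y = 1"
proof -
  have "Cm w 0 y = 1\<^sub>m 0" by (intro eq_matI) (auto simp: Cm_def)
  then show ?thesis by (simp add: E_def)
qed

lemma spec:
  assumes pos: "\<And>l. l < N \<Longrightarrow> 0 < w l"
  shows "2*m+2 \<le> N \<Longrightarrow> \<exists>R. distinct R \<and> (\<forall>r\<in>set R. 0 < r \<and> r \<le> (\<Sum>l<2*m+2. w l))
            \<and> char_poly (Qc w (2*m+2)) = tp R"
proof (induction m)
  case 0
  have "E w 1 y = y * (\<Prod>r\<leftarrow>[]. (y - complex_of_real r))" for y
    using E_iso[of 0 w y] by (simp add: E0)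
  from E_step[of 1 w "[]", OF _ this] have "char_poly (Qc w 2) = tp [w 1 + w 0]"
    by (simp add: numeral_2_eq_2)
  moreover have "0 < w 0" "0 < w 1" using pos 0 by auto
  ultimately show ?case
    by (intro exI[of _ "[w 1 + w 0]"]) (simp add: numeral_2_eq_2)
next
  case (Suc m)
  define n where "n = 2*m+2"
  have nN: "n + 2 \<le> N" using Suc.prems by (simp add: n_def)
  from Suc.IH nN obtain R where R: "distinct R" "\<forall>r\<in>set R. 0 < r \<and> r \<le> (\<Sum>l<n. w l)"
      "char_poly (Qc w n) = tp R" by (auto simp: n_def)
  have En: "E w n y = y * (\<Prod>r\<leftarrow>R. (y - complex_of_real r))" for y
    using R(3) by (simp add: E_char_poly poly_tp)
  have "E w (Suc n) y = y * (\<Prod>r\<leftarrow>0 # R. (y - complex_of_real r))" for y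
    using E_iso[of n w y] En by (simp add: n_def)
  from E_step[of "Suc n" w "0 # R", OF _ this]
  have cp: "char_poly (Qc w (Suc (Suc n))) =
      tp ((w (Suc n) + (\<Sum>l<Suc n. w l)) # w (Suc n) # map (\<lambda>r. r + w (Suc n)) R)"
    by (simp add: n_def)
  define a where "a = w (Suc n)"
  have a: "0 < a" using pos nN by (simp add: a_def)
  have wn: "0 < w n" using pos nN by simp
  have S0: "0 \<le> (\<Sum>l<n. w l)" using pos nN by (intro sum_nonneg) (simp add: less_imp_le)
  have S1: "(\<Sum>l<Suc n. w l) = (\<Sum>l<n. w l) + w n" by simp
  have S2: "(\<Sum>l<Suc (Suc n). w l) = a + (\<Sum>l<Suc n. w l)" by (simp add: a_def)
  let ?R = "(a + (\<Sum>l<Suc n. w l)) # a # map (\<lambda>r. r + a) R"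
  have "distinct ?R"
    using R(1,2) a wn S0 by (auto simp: S1 distinct_map inj_on_def)
  moreover have "\<forall>r\<in>set ?R. 0 < r \<and> r \<le> (\<Sum>l<Suc (Suc n). w l)"
    using R(2) a wn S0 by (fastforce simp: a_def)
  ultimately show ?case using cp
    by (intro exI[of _ ?R]) (simp add: n_def a_def)
qed

lemma order_lin: "order c [:-r, 1:] = (if c = r then 1 else (0::nat))"
proof (cases "c = r")
  case True
  then show ?thesis using order_power_n_n[of r 1] by simp
next
  case False
  have "poly [:-r, 1:] c \<noteq> 0" using False by simp
  then show ?thesis using False order_root[of "[:-r,1:]" c] by auto
qed

lemma prod_lin_nz: "(\<Prod>r\<leftarrow>L. [:- r, 1:]) \<noteq> (0 :: complex poly)"
proof (induction L)
  case Nil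
  show ?case by simp
next
  case (Cons r L)
  have "[:-r,1:] \<noteq> (0::complex poly)" by simp
  then show ?case using Cons.IH by (simp only: list.map prod_list.Cons mult_eq_0_iff) blast
qed

lemma order_prod_lin: fixes c :: complex shows "distinct L \<Longrightarrow> order c (\<Prod>r\<leftarrow>L. [:- r, 1:]) = (if c \<in> set L then 1 else (0::nat))"
proof (induction L)
  case Nil
  then show ?case using order_root[of "1::complex poly" c] by auto
next
  case (Cons r L)
  have "order c (\<Prod>r\<leftarrow>r # L. [:- r, 1:]) = order c [:-r,1:] + order c (\<Prod>r\<leftarrow>L. [:- r, 1:])"
    using prod_lin_nz[of "r # L"] by (simp only: list.map prod_list.Cons) (rule order_mult)
  then show ?case using Cons by (auto simp: order_lin)
qed

lemma order_tp: assumes "distinct R" "\<forall>r\<in>set R. 0 < r" shows "order c (tp R) \<le> 1"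
proof -
  have eq: "(\<Prod>r\<leftarrow>R. [:- complex_of_real r, 1:]) = (\<Prod>r\<leftarrow>map complex_of_real R. [:- r, 1:])"
    by (simp add: o_def)
  have d: "distinct (map complex_of_real R)" using assms(1) by (simp add: distinct_map inj_on_def)
  have z: "0 \<notin> set (map complex_of_real R)" using assms(2) by auto
  have "order c (tp R) = order c [:-0,1:] + order c (\<Prod>r\<leftarrow>map complex_of_real R. [:- r, 1:])"
    unfolding tp_def eq using prod_lin_nz[of "0 # map complex_of_real R"]
    by (simp only: list.map prod_list.Cons minus_zero) (rule order_mult)
  also have "\<dots> \<le> 1"
  proof -
    define Pr where "Pr = (\<Prod>r\<leftarrow>map complex_of_real R. [:- r, 1:])"
    have o1: "order c [:-0,1:] = (if c = 0 then 1 else 0)" by (rule order_lin)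
    have o2: "order c Pr = (if c \<in> set (map complex_of_real R) then 1 else 0)"
      unfolding Pr_def by (rule order_prod_lin[OF d])
    show ?thesis unfolding Pr_def[symmetric] o1 o2 using z by auto
  qed
  finally show ?thesis .
qed

lemma cadj_char:
  "fst u < m \<Longrightarrow> fst v < m \<Longrightarrow> cadj as m u v =
     (u \<noteq> v \<and> (if fst u = fst v then odd (m - 1 - fst u) else even (m - 1 - max (fst u) (fst v))))"
proof (induction m arbitrary: u v)
  case 0
  then show ?case by simp
next
  case (Suc m)
  show ?case
  proof (cases "fst u < m \<and> fst v < m")
    case True
    have e1: "Suc m - 1 - fst u = Suc (m - 1 - fst u)" using True by arith
    have e2: "Suc m - 1 - max (fst u) (fst v) = Suc (m - 1 - max (fst u) (fst v))" using True by arith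
    show ?thesis unfolding e1 e2 using Suc.IH[of u v] True by auto
  next
    case False
    have mm: "fst u = m \<or> fst v = m" using False Suc.prems by auto
    show ?thesis
    proof (cases "fst u = fst v")
      case True
      then have "fst u = m" "fst v = m" using mm by auto
      then show ?thesis by simp
    next
      case F2: False
      then have "max (fst u) (fst v) = m" using mm Suc.prems by auto
      then show ?thesis using F2 False by auto
    qed
  qed
qed

lemma par1: "even (k::nat) \<Longrightarrow> i < k \<Longrightarrow> odd (k - 1 - i) \<longleftrightarrow> even i" by presburger
lemma par2: "even (k::nat) \<Longrightarrow> i < k \<Longrightarrow> even (k - 1 - i) \<longleftrightarrow> odd i" by presburger
lemma par3: "even (k::nat) \<Longrightarrow> 2 \<le> k \<Longrightarrow> \<exists>m. k = 2*m+2" by presburger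

lemma Cadj_char: assumes "even (length as)" "fst u < length as" "fst v < length as"
  shows "Cadj as u v = (u \<noteq> v \<and> (if fst u = fst v then even (fst u) else odd (max (fst u) (fst v))))"
proof -
  have "max (fst u) (fst v) < length as" using assms by simp
  then show ?thesis using assms unfolding Cadj_def by (auto simp: cadj_char par1 par2)
qed

definition wt :: "nat list \<Rightarrow> nat \<Rightarrow> real" where "wt as l = real (as ! l)"

lemma cdeg_eq:
  assumes ev: "even (length as)" and i: "i < length as"
  shows "cdeg as (i,0) = (\<Sum>l<length as. if l = i then (if even i then as ! i - 1 else 0)
            else (if odd (max i l) then as ! l else 0))"
proof -
  let ?k = "length as"
  have "{v \<in> cverts as. Cadj as (i,0) v} = Sigma {..<?k} (\<lambda>l. {t. t < as ! l \<and> Cadj as (i,0) (l,t)})"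
    by (auto simp: cverts_def)
  then have "cdeg as (i,0) = (\<Sum>l<?k. card {t. t < as ! l \<and> Cadj as (i,0) (l,t)})"
    unfolding cdeg_def by (simp add: card_SigmaI)
  also have "\<dots> = (\<Sum>l<?k. if l = i then (if even i then as ! i - 1 else 0)
            else (if odd (max i l) then as ! l else 0))"
  proof (intro sum.cong refl)
    fix l assume l: "l \<in> {..<?k}"
    have eq: "{t. t < as ! l \<and> Cadj as (i,0) (l,t)} =
       (if l = i then (if even i then {1..<as ! i} else {}) else (if odd (max i l) then {..<as ! l} else {}))"
      using l i ev by (auto simp: Cadj_char)
    show "card {t. t < as ! l \<and> Cadj as (i,0) (l,t)} = (if l = i then (if even i then as ! i - 1 else 0)
            else (if odd (max i l) then as ! l else 0))"
      unfolding eq by auto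
  qed
  finally show ?thesis .
qed

lemma QL_entry:
  assumes ev: "even (length as)" and pos: "\<forall>a \<in> set as. a > 0"
    and i: "i < length as" and j: "j < length as"
  shows "QL as $$ (i,j) = qe (wt as) (length as) i j"
proof -
  let ?k = "length as"
  have Q: "QL as $$ (i,j) = (\<Sum>t<as ! j. lap as (i,0) (j,t))"
    using i j by (simp add: QL_def)
  show ?thesis
  proof (cases "i = j")
    case False
    have "(\<Sum>t<as ! j. lap as (i,0) (j,t)) = (\<Sum>t<as ! j. if odd (max i j) then -1 else 0)"
      using False i j ev by (intro sum.cong) (auto simp: lap_def Cadj_char)
    then show ?thesis using False by (simp add: Q qe_def ladj_def wt_def)
  next
    case True
    then have ij: "j = i" by simp
    have ai: "as ! i > 0" using pos i by auto
    then obtain p where p: "as ! i = Suc p" by (cases "as ! i") auto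
    have "(\<Sum>t<as ! i. lap as (i,0) (i,t)) = lap as (i,0) (i,0) + (\<Sum>t<p. lap as (i,0) (i,Suc t))"
      unfolding p sum.lessThan_Suc_shift ..
    also have "(\<Sum>t<p. lap as (i,0) (i,Suc t)) = (\<Sum>t<p. if even i then -1 else 0)"
      using i ev by (intro sum.cong) (auto simp: lap_def Cadj_char)
    also have "lap as (i,0) (i,0) = real (cdeg as (i,0))" by (simp add: lap_def)
    also have "real (cdeg as (i,0)) = (\<Sum>l<?k. if l = i then (if even i then real p else 0)
            else (if odd (max i l) then real (as ! l) else 0))"
      unfolding cdeg_eq[OF ev i] of_nat_sum by (intro sum.cong) (auto simp: p)
    also have "\<dots> = (\<Sum>l<?k. (if l = i then (if even i then real p else 0) else 0)
            + (if ladj i l then wt as l else 0))"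
      by (intro sum.cong) (auto simp: ladj_def wt_def)
    also have "\<dots> = (if even i then real p else 0) + (\<Sum>l<?k. if ladj i l then wt as l else 0)"
      using i by (simp add: sum.distrib)
    finally have X: "(\<Sum>t<as ! i. lap as (i,0) (i,t)) = (if even i then real p else 0) + (\<Sum>l<?k. if ladj i l then wt as l else 0) + (\<Sum>t<p. if even i then -1 else 0)" .
    show ?thesis using Q X unfolding ij qe_def by simp
  qed
qed

lemma QL_Qc: assumes "even (length as)" "\<forall>a \<in> set as. a > 0"
  shows "map_mat complex_of_real (QL as) = Qc (wt as) (length as)"
proof -
  have d: "dim_row (QL as) = length as" "dim_col (QL as) = length as" by (simp_all add: QL_def)
  show ?thesis by (intro eq_matI) (simp_all add: d Qc_def QL_entry[OF assms])
qed

theorem mainTheorem3: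
  fixes as :: "nat list" and k :: nat
  assumes "length as = k" and "k \<ge> 2" and "even k"
    and "\<forall>a \<in> set as. a > 0"
  shows "\<forall>c::complex. order c (char_poly (map_mat complex_of_real (QL as))) \<le> 1"
proof
  fix c :: complex
  obtain m where m: "k = 2*m+2" using par3[OF assms(3,2)] by blast
  have pos: "\<And>l. l < k \<Longrightarrow> 0 < wt as l" using assms(1,4) by (auto simp: wt_def)
  obtain R where R: "distinct R" "\<forall>r\<in>set R. 0 < r \<and> r \<le> (\<Sum>l<2*m+2. wt as l)"
     "char_poly (Qc (wt as) (2*m+2)) = tp R"
    using spec[of k "wt as" m, OF pos] m by auto
  have "char_poly (map_mat complex_of_real (QL as)) = tp R"
    using QL_Qc[of as] assms R(3) m by simp
  then show "order c (char_poly (map_mat complex_of_real (QL as))) \<le> 1"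
    using order_tp[OF R(1)] R(2) by simp
qed

end
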